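(* Let $G=(V_G,E_G)$ be a finite graph whose automorphism group acts vertex-transitively on $V_G$. Then for every real vector $\vec J=(J_\alpha)_{\alpha\in V_G}$, the optimum of the graph semi-definite program for $H$ is at most $$-\Bigl(\sum_\alpha |J_\alpha|\Bigr)\,|V_G|^{-1/2}\sqrt{\vartheta(G)}.$$
   Context: Let $G=(V_G,E_G)$ be a finite graph; rows and columns of the matrices below are indexed by $V_G$. For a real vector $\vec J$, the "graph semi-definite program for $H$" is: minimize $(\vec J,v)=\sum_\alpha J_\alpha v_\alpha$ over real vectors $v$ and real symmetric matrices $M$, subject to: - $M_{\alpha,\alpha}=1$ for all $\alpha$; - $M_{\alpha,\beta}=0$ whenever $(\alpha,\beta)\in E_G$; - the block matrix $N=\begin{pmatrix}1 & v^T\\ v & M\end{pmatrix}$ is positive semi-definite. $\vartheta(G)$ denotes the Lovász theta function: the maximum of the sum of all entries of a real symmetric positive semi-definite matrix $B$ with $\mathrm{tr}\,B=1$ and $B_{\alpha,\beta}=0$ whenever $(\alpha,\beta)\in E_G$. *)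

theory Defs
  imports "HOL-Analysis.Analysis"
begin

text \<open>Graphs: vertex set is a finite type 'a, edges a symmetric irreflexive relation E.\<close>

definition graph_aut :: "('a \<Rightarrow> 'a \<Rightarrow> bool) \<Rightarrow> ('a \<Rightarrow> 'a) \<Rightarrow> bool" where
  "graph_aut E \<sigma> \<longleftrightarrow> bij \<sigma> \<and> (\<forall>x y. E (\<sigma> x) (\<sigma> y) \<longleftrightarrow> E x y)"

definition vertex_transitive :: "('a \<Rightarrow> 'a \<Rightarrow> bool) \<Rightarrow> bool" where
  "vertex_transitive E \<longleftrightarrow> (\<forall>x y. \<exists>\<sigma>. graph_aut E \<sigma> \<and> \<sigma> x = y)"

definition psd :: "real^'n^'n \<Rightarrow> bool" where
  "psd A \<longleftrightarrow> transpose A = A \<and> (\<forall>x. 0 \<le> x \<bullet> (A *v x))"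

text \<open>The block matrix N = [[1, v^T],[v, M]], indexed by None (the extra row/column) and Some a.\<close>
definition block_mat :: "real^'a \<Rightarrow> real^'a^'a \<Rightarrow> real^('a option)^('a option)" where
  "block_mat v M = (\<chi> i j. (case i of
       None \<Rightarrow> (case j of None \<Rightarrow> 1 | Some b \<Rightarrow> v $ b)
     | Some a \<Rightarrow> (case j of None \<Rightarrow> v $ a | Some b \<Rightarrow> M $ a $ b)))"

definition sdp_feasible :: "('a \<Rightarrow> 'a \<Rightarrow> bool) \<Rightarrow> real^'a \<Rightarrow> real^'a^'a \<Rightarrow> bool" where
  "sdp_feasible E v M \<longleftrightarrow> transpose M = M \<and> (\<forall>a. M $ a $ a = 1)
     \<and> (\<forall>a b. E a b \<longrightarrow> M $ a $ b = 0) \<and> psd (block_mat v M)"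

definition sdp_opt :: "('a::finite \<Rightarrow> 'a \<Rightarrow> bool) \<Rightarrow> real^'a \<Rightarrow> real" where
  "sdp_opt E J = Inf {(\<Sum>a\<in>UNIV. J $ a * v $ a) | v M. sdp_feasible E v M}"

definition lovasz_theta :: "('a::finite \<Rightarrow> 'a \<Rightarrow> bool) \<Rightarrow> real" where
  "lovasz_theta E = Sup {(\<Sum>a\<in>UNIV. \<Sum>b\<in>UNIV. B $ a $ b) | B.
      psd B \<and> (\<Sum>a\<in>UNIV. B $ a $ a) = 1 \<and> (\<forall>a b. E a b \<longrightarrow> B $ a $ b = 0)}"

end

theory Submission imports Defs begin
definition qf :: "real^'n^'n \<Rightarrow> real^'n \<Rightarrow> real" where
  "qf A x = (\<Sum>i\<in>UNIV. \<Sum>j\<in>UNIV. x$i * A$i$j * x$j)"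
lemma inner_qf: "x \<bullet> (A *v x) = qf A x"
  by (simp add: qf_def inner_vec_def matrix_vector_mult_def sum_distrib_left mult.assoc mult.left_commute)
lemma psd_iff: "psd A \<longleftrightarrow> transpose A = A \<and> (\<forall>x. 0 \<le> qf A x)"
  by (simp add: psd_def inner_qf)
lemma sum_option: "(\<Sum>i\<in>(UNIV::'a::finite option set). f i) = f None + (\<Sum>a\<in>UNIV. f (Some a))"
  by (simp add: UNIV_option_conv sum.reindex)
lemma block_qf: "qf (block_mat v M) x = (x$None)^2 + 2*(x$None)*(\<Sum>a\<in>UNIV. v$a * x$(Some a))
   + (\<Sum>a\<in>UNIV. \<Sum>b\<in>UNIV. x$(Some a) * M$a$b * x$(Some b))"
  by (simp add: qf_def sum_option block_mat_def sum.distrib sum_distrib_left power2_eq_square algebra_simps)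
lemma key:
  fixes M :: "real^'a::finite^'a"
  assumes psd: "\<And>x. 0 \<le> qf M x" and rows: "\<And>a. (\<Sum>b\<in>UNIV. M$a$b) = r"
    and cols: "\<And>b. (\<Sum>a\<in>UNIV. M$a$b) = r"
  shows "(r / real CARD('a)) * (\<Sum>a\<in>UNIV. z$a)^2 \<le> qf M z"
proof -
  define S where "S = (\<Sum>a\<in>UNIV. z$a)"
  define n where "n = real CARD('a)"
  have n0: "n > 0" unfolding n_def by simp
  define t where "t = S / n"
  define w where "w = (\<chi> a. z$a - t :: real^'a)"
  have e: "qf M w = qf M z - t * (\<Sum>a\<in>UNIV. z$a * (\<Sum>b\<in>UNIV. M$a$b))
      - t * (\<Sum>b\<in>UNIV. z$b * (\<Sum>a\<in>UNIV. M$a$b)) + t^2 * (\<Sum>a\<in>UNIV. \<Sum>b\<in>UNIV. M$a$b)"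
  proof -
    have "qf M w = (\<Sum>a\<in>UNIV. \<Sum>b\<in>UNIV. z$a * M$a$b * z$b - t * (z$a * M$a$b) - t * (z$b * M$a$b) + t^2 * M$a$b)"
      unfolding qf_def w_def by (simp add: algebra_simps power2_eq_square)
    also have "\<dots> = qf M z - t * (\<Sum>a\<in>UNIV. \<Sum>b\<in>UNIV. z$a * M$a$b) - t * (\<Sum>a\<in>UNIV. \<Sum>b\<in>UNIV. z$b * M$a$b)
       + t^2 * (\<Sum>a\<in>UNIV. \<Sum>b\<in>UNIV. M$a$b)"
      unfolding qf_def by (simp add: sum.distrib sum_subtractf sum_distrib_left)
    also have "(\<Sum>a\<in>UNIV. \<Sum>b\<in>UNIV. z$b * M$a$b) = (\<Sum>b\<in>UNIV. \<Sum>a\<in>UNIV. z$b * M$a$b)"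
      by (rule sum.swap)
    finally show ?thesis by (simp add: sum_distrib_left)
  qed
  have "qf M w = qf M z - t * S * r - t * S * r + t^2 * (n * r)"
    unfolding e by (simp add: rows cols S_def n_def sum_distrib_right sum_distrib_left[symmetric] mult.commute)
  also have "\<dots> = qf M z - (r / n) * S^2"
    unfolding t_def using n0 by (simp add: field_simps power2_eq_square)
  finally show ?thesis using psd[of w] by (simp add: S_def n_def)
qed
lemma construct:
  fixes M :: "real^'a::finite^'a" and J :: "real^'a"
  assumes symM: "\<And>a b. M$a$b = M$b$a" and psdM: "\<And>x. 0 \<le> qf M x"
    and diag: "\<And>a. M$a$a = 1" and edges: "\<And>a b. E a b \<Longrightarrow> M$a$b = 0"
    and rows: "\<And>a. (\<Sum>b\<in>UNIV. M$a$b) = s" and s0: "0 \<le> s"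
  shows "\<exists>v M'. sdp_feasible E v M' \<and> (\<Sum>a\<in>UNIV. J$a * v$a) = - (\<Sum>a\<in>UNIV. \<bar>J $ a\<bar>) * sqrt (s / real CARD('a))"
proof -
  define d where "d a = (if J$a \<ge> 0 then 1 else (-1::real))" for a
  have dd: "d a * d a = 1" for a by (simp add: d_def)
  have dJ: "J$a * d a = \<bar>J$a\<bar>" for a by (simp add: d_def)
  define c where "c = sqrt (s / real CARD('a))"
  have c2: "c^2 = s / real CARD('a)" using s0 by (simp add: c_def)
  define v where "v = (\<chi> a. - c * d a :: real^'a)"
  define M' where "M' = (\<chi> a b. d a * d b * M$a$b :: real^'a^'a)"
  have cols: "(\<Sum>a\<in>UNIV. M$a$b) = s" for b using rows[of b] by (simp add: symM)
  have symM': "transpose M' = M'"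
    by (simp add: M'_def transpose_def vec_eq_iff symM mult.commute)
  have "psd (block_mat v M')"
  proof -
    have tr: "transpose (block_mat v M') = block_mat v M'"
      unfolding vec_eq_iff transpose_def block_mat_def
      using symM' by (auto simp: vec_eq_iff transpose_def split: option.splits)
    have "0 \<le> qf (block_mat v M') x" for x
    proof -
      define t where "t = x$None"
      define z where "z = (\<chi> a. d a * x$(Some a) :: real^'a)"
      have "qf (block_mat v M') x = t^2 - 2*t*c*(\<Sum>a\<in>UNIV. z$a) + qf M z"
        unfolding block_qf
        by (simp add: t_def z_def v_def M'_def qf_def sum_negf sum_distrib_left algebra_simps)
      moreover have "c^2 * (\<Sum>a\<in>UNIV. z$a)^2 \<le> qf M z"
        using key[of M s z, OF psdM rows cols] c2 by simp
      ultimately have "qf (block_mat v M') x \<ge> (t - c * (\<Sum>a\<in>UNIV. z$a))^2"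
        by (simp add: power2_eq_square algebra_simps)
      thus ?thesis by (meson order_trans zero_le_power2)
    qed
    thus ?thesis using tr by (simp add: psd_iff)
  qed
  moreover have "M'$a$a = 1" for a by (simp add: M'_def diag dd)
  moreover have "E a b \<Longrightarrow> M'$a$b = 0" for a b by (simp add: M'_def edges)
  ultimately have "sdp_feasible E v M'" using symM' by (simp add: sdp_feasible_def)
  moreover have "(\<Sum>a\<in>UNIV. J$a * v$a) = - (\<Sum>a\<in>UNIV. \<bar>J $ a\<bar>) * c"
    by (simp add: v_def dJ[symmetric] sum_distrib_right sum_distrib_left sum_negf algebra_simps)
  ultimately show ?thesis unfolding c_def by blast
qed
lemma aut_comp: "graph_aut E \<sigma> \<Longrightarrow> graph_aut E \<tau> \<Longrightarrow> graph_aut E (\<sigma> \<circ> \<tau>)"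
  by (simp add: graph_aut_def bij_comp)
lemma aut_inv: "graph_aut E \<tau> \<Longrightarrow> graph_aut E (inv \<tau>)"
  unfolding graph_aut_def
  by (metis bij_imp_bij_inv bij_inv_eq_iff)
lemma sum_bij: "bij (\<sigma>::'a::finite\<Rightarrow>'a) \<Longrightarrow> (\<Sum>a\<in>UNIV. g (\<sigma> a)) = (\<Sum>a\<in>UNIV. g a)"
  using sum.reindex_bij_betw[of \<sigma> UNIV UNIV g] by (simp add: bij_betw_def bij_def)
lemma qf_bij:
  fixes B :: "real^'a::finite^'a" and \<sigma> :: "'a \<Rightarrow> 'a"
  assumes "bij \<sigma>" "\<And>x. 0 \<le> qf B x"
  shows "0 \<le> (\<Sum>a\<in>UNIV. \<Sum>b\<in>UNIV. x$a * B$(\<sigma> a)$(\<sigma> b) * x$b)"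
proof -
  define y where "y = (\<chi> i. x$(inv \<sigma> i) :: real^'a)"
  have xy: "x$a = y$(\<sigma> a)" for a using assms(1) by (simp add: y_def bij_is_inj)
  have "(\<Sum>a\<in>UNIV. \<Sum>b\<in>UNIV. x$a * B$(\<sigma> a)$(\<sigma> b) * x$b)
      = (\<Sum>a\<in>UNIV. \<Sum>b\<in>UNIV. y$(\<sigma> a) * B$(\<sigma> a)$(\<sigma> b) * y$(\<sigma> b))" by (simp add: xy)
  also have "\<dots> = (\<Sum>a\<in>UNIV. \<Sum>b\<in>UNIV. y$a * B$a$(\<sigma> b) * y$(\<sigma> b))"
    using sum_bij[OF assms(1), of "\<lambda>a. \<Sum>b\<in>UNIV. y$a * B$a$(\<sigma> b) * y$(\<sigma> b)"] by simp
  also have "\<dots> = qf B y" unfolding qf_def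
    by (rule sum.cong[OF refl], rule sum_bij[OF assms(1)])
  finally show ?thesis using assms(2) by simp
qed

lemma average:
  fixes E :: "'a::finite \<Rightarrow> 'a \<Rightarrow> bool" and B :: "real^'a^'a"
  assumes vt: "vertex_transitive E"
    and psdB: "psd B" and trB: "(\<Sum>a\<in>UNIV. B$a$a) = 1" and edB: "\<forall>a b. E a b \<longrightarrow> B$a$b = 0"
  defines "s \<equiv> (\<Sum>a\<in>UNIV. \<Sum>b\<in>UNIV. B$a$b)"
  shows "\<exists>M::real^'a^'a. (\<forall>a b. M$a$b = M$b$a) \<and> (\<forall>x. 0 \<le> qf M x) \<and> (\<forall>a. M$a$a = 1)
     \<and> (\<forall>a b. E a b \<longrightarrow> M$a$b = 0) \<and> (\<forall>a. (\<Sum>b\<in>UNIV. M$a$b) = s) \<and> 0 \<le> s"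
proof -
  have symB: "B$a$b = B$b$a" for a b
    using psdB unfolding psd_def by (metis transpose_def vec_lambda_beta)
  have qB: "0 \<le> qf B x" for x using psdB by (simp add: psd_iff)
  have s0: "0 \<le> s" using qB[of "\<chi> a. 1"] by (simp add: qf_def s_def)
  define Aut where "Aut = {\<sigma>. graph_aut E \<sigma>}"
  have finA: "finite Aut" by (rule finite_subset[of _ UNIV]) auto
  have idA: "id \<in> Aut" by (simp add: Aut_def graph_aut_def)
  define m where "m = real (card Aut)"
  have m0: "m > 0" using finA idA by (auto simp: m_def card_gt_0_iff)
  define n where "n = real CARD('a)"
  have n0: "n > 0" by (simp add: n_def)
  have bijA: "\<sigma> \<in> Aut \<Longrightarrow> bij \<sigma>" for \<sigma> by (simp add: Aut_def graph_aut_def)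
  define Bs where "Bs a b = (\<Sum>\<sigma>\<in>Aut. B$(\<sigma> a)$(\<sigma> b))" for a b
  have inv: "Bs (\<tau> a) (\<tau> b) = Bs a b" if t: "\<tau> \<in> Aut" for \<tau> a b
  proof -
    have "bij_betw (\<lambda>\<sigma>. \<sigma> \<circ> \<tau>) Aut Aut"
    proof (rule bij_betw_byWitness[where f'="\<lambda>\<sigma>. \<sigma> \<circ> inv \<tau>"])
      have bt: "bij \<tau>" using t bijA by blast
      show "\<forall>a\<in>Aut. a \<circ> \<tau> \<circ> inv \<tau> = a" using bt
        by (simp add: fun_eq_iff bij_is_surj surj_f_inv_f)
      show "\<forall>a'\<in>Aut. a' \<circ> inv \<tau> \<circ> \<tau> = a'" using bt
        by (simp add: fun_eq_iff bij_is_inj inv_f_f)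
      show "(\<lambda>\<sigma>. \<sigma> \<circ> \<tau>) ` Aut \<subseteq> Aut" using t by (auto simp: Aut_def aut_comp)
      show "(\<lambda>\<sigma>. \<sigma> \<circ> inv \<tau>) ` Aut \<subseteq> Aut" using t by (auto simp: Aut_def aut_comp aut_inv)
    qed
    from sum.reindex_bij_betw[OF this, of "\<lambda>\<sigma>. B$(\<sigma> a)$(\<sigma> b)"]
    show ?thesis by (simp add: Bs_def)
  qed
  have trBs: "(\<Sum>a\<in>UNIV. Bs a a) = m"
  proof -
    have "(\<Sum>a\<in>UNIV. Bs a a) = (\<Sum>\<sigma>\<in>Aut. \<Sum>a\<in>UNIV. B$(\<sigma> a)$(\<sigma> a))"
      unfolding Bs_def by (rule sum.swap)
    also have "\<dots> = (\<Sum>\<sigma>\<in>Aut. 1)"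
      using sum_bij[OF bijA, of _ "\<lambda>a. B$a$a"] trB by (intro sum.cong[OF refl]) simp
    finally show ?thesis by (simp add: m_def)
  qed
  have totBs: "(\<Sum>a\<in>UNIV. \<Sum>b\<in>UNIV. Bs a b) = m * s"
  proof -
    have "(\<Sum>a\<in>UNIV. \<Sum>b\<in>UNIV. Bs a b) = (\<Sum>a\<in>UNIV. \<Sum>\<sigma>\<in>Aut. \<Sum>b\<in>UNIV. B$(\<sigma> a)$(\<sigma> b))"
      unfolding Bs_def by (rule sum.cong[OF refl], rule sum.swap)
    also have "\<dots> = (\<Sum>\<sigma>\<in>Aut. \<Sum>a\<in>UNIV. \<Sum>b\<in>UNIV. B$(\<sigma> a)$(\<sigma> b))"
      by (rule sum.swap)
    also have "\<dots> = (\<Sum>\<sigma>\<in>Aut. s)"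
    proof (rule sum.cong[OF refl])
      fix \<sigma> assume "\<sigma> \<in> Aut"
      hence b: "bij \<sigma>" by (rule bijA)
      show "(\<Sum>a\<in>UNIV. \<Sum>b\<in>UNIV. B$(\<sigma> a)$(\<sigma> b)) = s"
        unfolding s_def
        using sum_bij[OF b, of "\<lambda>a. \<Sum>b\<in>UNIV. B$a$(\<sigma> b)"] sum_bij[OF b, of "\<lambda>b. B$_$b"] by simp
    qed
    finally show ?thesis by (simp add: m_def)
  qed
  obtain a0 :: 'a where True by blast
  have tr: "\<exists>\<tau>\<in>Aut. \<tau> a0 = a" for a using vt by (auto simp: vertex_transitive_def Aut_def)
  have diagc: "Bs a a = Bs a0 a0" for a using tr[of a] inv by metis
  have rowc: "(\<Sum>b\<in>UNIV. Bs a b) = (\<Sum>b\<in>UNIV. Bs a0 b)" for a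
  proof -
    obtain \<tau> where t: "\<tau> \<in> Aut" "\<tau> a0 = a" using tr by blast
    have "(\<Sum>b\<in>UNIV. Bs a b) = (\<Sum>b\<in>UNIV. Bs (\<tau> a0) (\<tau> b))"
      using sum_bij[OF bijA[OF t(1)], of "Bs a"] t(2) by simp
    also have "\<dots> = (\<Sum>b\<in>UNIV. Bs a0 b)" using inv[OF t(1)] by simp
    finally show ?thesis .
  qed
  have "(\<Sum>a\<in>UNIV. Bs a a) = (\<Sum>a\<in>(UNIV::'a set). Bs a0 a0)" by (rule sum.cong[OF refl], rule diagc)
  hence d0: "n * Bs a0 a0 = m" using trBs by (simp add: n_def)
  have "(\<Sum>a\<in>UNIV. \<Sum>b\<in>UNIV. Bs a b) = (\<Sum>a\<in>(UNIV::'a set). \<Sum>b\<in>UNIV. Bs a0 b)" by (rule sum.cong[OF refl], rule rowc)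
  hence r0: "n * (\<Sum>b\<in>UNIV. Bs a0 b) = m * s" using totBs by (simp add: n_def)
  define M where "M = (\<chi> a b. (n / m) * Bs a b :: real^'a^'a)"
  have "\<forall>a b. M$a$b = M$b$a" by (simp add: M_def Bs_def symB)
  moreover have "\<forall>a. M$a$a = 1"
  proof
    fix a
    have "M$a$a = (n / m) * Bs a0 a0" by (simp add: M_def diagc[of a])
    also have "\<dots> = 1" using d0 m0 n0 by (simp add: field_simps)
    finally show "M$a$a = 1" .
  qed
  moreover have "\<forall>a b. E a b \<longrightarrow> M$a$b = 0"
  proof (intro allI impI)
    fix a b assume "E a b"
    hence "\<sigma> \<in> Aut \<Longrightarrow> B$(\<sigma> a)$(\<sigma> b) = 0" for \<sigma> using edB by (simp add: Aut_def graph_aut_def)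
    thus "M$a$b = 0" by (simp add: M_def Bs_def)
  qed
  moreover have "\<forall>a. (\<Sum>b\<in>UNIV. M$a$b) = s"
  proof
    fix a
    have "(\<Sum>b\<in>UNIV. M$a$b) = (n / m) * (\<Sum>b\<in>UNIV. Bs a0 b)"
      by (simp add: M_def sum_distrib_left sum_divide_distrib rowc[of a, symmetric])
    also have "\<dots> = s" using r0 m0 n0 by (simp add: field_simps)
    finally show "(\<Sum>b\<in>UNIV. M$a$b) = s" .
  qed
  moreover have "\<forall>x. 0 \<le> qf M x"
  proof
    fix x :: "real^'a"
    have "qf M x = (n / m) * (\<Sum>\<sigma>\<in>Aut. \<Sum>a\<in>UNIV. \<Sum>b\<in>UNIV. x$a * B$(\<sigma> a)$(\<sigma> b) * x$b)"
    proof -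
      have "qf M x = (n / m) * (\<Sum>a\<in>UNIV. \<Sum>b\<in>UNIV. \<Sum>\<sigma>\<in>Aut. x$a * B$(\<sigma> a)$(\<sigma> b) * x$b)"
        by (simp add: qf_def M_def Bs_def sum_distrib_left sum_distrib_right algebra_simps)
      also have "(\<Sum>a\<in>UNIV. \<Sum>b\<in>UNIV. \<Sum>\<sigma>\<in>Aut. x$a * B$(\<sigma> a)$(\<sigma> b) * x$b)
          = (\<Sum>a\<in>UNIV. \<Sum>\<sigma>\<in>Aut. \<Sum>b\<in>UNIV. x$a * B$(\<sigma> a)$(\<sigma> b) * x$b)"
        by (rule sum.cong[OF refl], rule sum.swap)
      also have "\<dots> = (\<Sum>\<sigma>\<in>Aut. \<Sum>a\<in>UNIV. \<Sum>b\<in>UNIV. x$a * B$(\<sigma> a)$(\<sigma> b) * x$b)"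
        by (rule sum.swap)
      finally show ?thesis .
    qed
    moreover have "0 \<le> (\<Sum>\<sigma>\<in>Aut. \<Sum>a\<in>UNIV. \<Sum>b\<in>UNIV. x$a * B$(\<sigma> a)$(\<sigma> b) * x$b)"
      by (rule sum_nonneg) (rule qf_bij[OF bijA qB])
    ultimately show "0 \<le> qf M x" using m0 n0 by simp
  qed
  ultimately show ?thesis using s0 by blast
qed
lemma feas_bound:
  fixes v :: "real^'a::finite"
  assumes "sdp_feasible E v M"
  shows "\<bar>v$a\<bar> \<le> 1"
proof -
  define x where "x = (\<chi> i. if i = None then 1 else if i = Some a then - v$a else 0 :: real^('a option))"
  have p: "psd (block_mat v M)" and d: "M$a$a = 1" using assms by (auto simp: sdp_feasible_def)
  have "0 \<le> qf (block_mat v M) x" using p by (simp add: psd_iff)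
  also have "qf (block_mat v M) x = 1 - (v$a)^2"
    unfolding block_qf by (simp add: x_def d if_distrib[of "\<lambda>t. _ * t"] if_distrib[of "\<lambda>t. t * _"] if_distrib[of uminus] power2_eq_square cong: if_cong)
  finally have "(v$a)^2 \<le> 1" by simp
  thus ?thesis by (simp add: abs_square_le_1)
qed

lemma sup_arg:
  fixes S :: "real set"
  assumes ne: "S \<noteq> {}" and nn: "\<And>s. s \<in> S \<Longrightarrow> 0 \<le> s" and K: "0 \<le> K"
    and le: "\<And>s. s \<in> S \<Longrightarrow> X \<le> - K * sqrt s"
  shows "X \<le> - K * sqrt (Sup S)"
proof -
  obtain s0 where s0: "s0 \<in> S" using ne by blast
  have "0 \<le> K * sqrt s0" using nn[OF s0] K by simp
  hence X0: "X \<le> 0" using le[OF s0] by linarith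
  show ?thesis
  proof (cases "K = 0")
    case True thus ?thesis using X0 by simp
  next
    case False
    hence Kp: "K > 0" using K by simp
    define w where "w = - X / K"
    have w0: "0 \<le> w" using X0 Kp by (simp add: w_def divide_nonpos_pos)
    have "s \<le> w^2" if "s \<in> S" for s
    proof -
      have "K * sqrt s \<le> - X" using le[OF that] by simp
      hence "sqrt s \<le> w" using Kp by (simp add: w_def field_simps mult.commute)
      hence "sqrt s ^ 2 \<le> w^2" using nn[OF that] by (intro power_mono) auto
      thus ?thesis using nn[OF that] by simp
    qed
    hence "Sup S \<le> w^2" using ne by (intro cSup_least) auto
    hence "sqrt (Sup S) \<le> w" using w0 by (metis real_sqrt_abs real_sqrt_le_mono abs_of_nonneg)
    hence "K * sqrt (Sup S) \<le> K * w" using Kp by simp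
    also have "K * w = - X" using Kp by (simp add: w_def)
    finally show ?thesis by simp
  qed
qed

theorem mainTheorem2:
  fixes E :: "'a::finite \<Rightarrow> 'a \<Rightarrow> bool" and J :: "real^'a"
  assumes "\<And>x y. E x y \<Longrightarrow> E y x"
    and "\<And>x. \<not> E x x"
    and "vertex_transitive E"
  shows "sdp_opt E J \<le> - (\<Sum>a\<in>UNIV. \<bar>J $ a\<bar>) * (1 / sqrt (real CARD('a))) * sqrt (lovasz_theta E)"
proof -
  define A where "A = (\<Sum>a\<in>UNIV. \<bar>J $ a\<bar>)"
  define n where "n = real CARD('a)"
  have n0: "n > 0" by (simp add: n_def)
  define F where "F = {(\<Sum>a\<in>UNIV. J $ a * v $ a) | v M. sdp_feasible E v M}"
  define T where "T = {(\<Sum>a\<in>UNIV. \<Sum>b\<in>UNIV. B $ a $ b) | B :: real^'a^'a.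
      psd B \<and> (\<Sum>a\<in>UNIV. B $ a $ a) = 1 \<and> (\<forall>a b. E a b \<longrightarrow> B $ a $ b = 0)}"
  have bdd: "bdd_below F"
  proof (rule bdd_belowI)
    fix y assume "y \<in> F"
    then obtain v M where f: "sdp_feasible E v M" and y: "y = (\<Sum>a\<in>UNIV. J $ a * v $ a)"
      unfolding F_def by blast
    have "- \<bar>J$a\<bar> \<le> J $ a * v $ a" for a
    proof -
      have "\<bar>J$a * v$a\<bar> \<le> \<bar>J$a\<bar>" using feas_bound[OF f, of a]
        by (simp add: abs_mult mult_left_le)
      thus ?thesis by linarith
    qed
    hence "(\<Sum>a\<in>UNIV. - \<bar>J$a\<bar>) \<le> y" unfolding y by (rule sum_mono)
    thus "- A \<le> y" by (simp add: A_def sum_negf)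
  qed
  have each: "sdp_opt E J \<le> - (A * (1 / sqrt n)) * sqrt s" and nn: "0 \<le> s" if sT: "s \<in> T" for s
  proof -
    obtain B :: "real^'a^'a" where B: "psd B" "(\<Sum>a\<in>UNIV. B $ a $ a) = 1" "\<forall>a b. E a b \<longrightarrow> B $ a $ b = 0"
      and s: "s = (\<Sum>a\<in>UNIV. \<Sum>b\<in>UNIV. B $ a $ b)" using sT unfolding T_def by blast
    obtain M :: "real^'a^'a" where M: "\<forall>a b. M$a$b = M$b$a" "\<forall>x. 0 \<le> qf M x" "\<forall>a. M$a$a = 1"
       "\<forall>a b. E a b \<longrightarrow> M$a$b = 0" "\<forall>a. (\<Sum>b\<in>UNIV. M$a$b) = s" "0 \<le> s"
      using average[OF assms(3) B] s by blast
    obtain v M' where vM: "sdp_feasible E v M'"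
      "(\<Sum>a\<in>UNIV. J$a * v$a) = - A * sqrt (s / n)"
      using construct[of M E s J] M by (auto simp: A_def n_def)
    have "sdp_opt E J \<le> - A * sqrt (s / n)"
    proof -
      have "- A * sqrt (s / n) \<in> F" unfolding F_def using vM by (metis (mono_tags, lifting) mem_Collect_eq)
      thus ?thesis unfolding sdp_opt_def using bdd unfolding F_def by (rule cInf_lower)
    qed
    also have "- A * sqrt (s / n) = - (A * (1 / sqrt n)) * sqrt s"
      by (simp add: real_sqrt_divide)
    finally show "sdp_opt E J \<le> - (A * (1 / sqrt n)) * sqrt s" .
    show "0 \<le> s" by (rule M(6))
  qed
  have Tne: "T \<noteq> {}"
  proof -
    define B where "B = (\<chi> a b. if a = b then 1 / n else 0 :: real^'a^'a)"
    have "transpose B = B" by (simp add: B_def transpose_def vec_eq_iff)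
    moreover have "0 \<le> qf B x" for x
      unfolding qf_def B_def using n0
      by (simp add: if_distrib[of "\<lambda>t. _ * t"] cong: if_cong) (auto intro!: sum_nonneg)
    moreover have "(\<Sum>a\<in>UNIV. B $ a $ a) = 1" using n0 by (simp add: B_def n_def)
    moreover have "\<forall>a b. E a b \<longrightarrow> B $ a $ b = 0" using assms(2) by (auto simp: B_def)
    ultimately show ?thesis unfolding T_def by (auto simp: psd_iff)
  qed
  have "sdp_opt E J \<le> - (A * (1 / sqrt n)) * sqrt (Sup T)"
  proof (rule sup_arg[OF Tne nn])
    show "0 \<le> A * (1 / sqrt n)" using n0 by (simp add: A_def)
  next
    fix s assume "s \<in> T"
    thus "sdp_opt E J \<le> - (A * (1 / sqrt n)) * sqrt s" by (rule each)
  qed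
  moreover have th: "lovasz_theta E = Sup T" unfolding lovasz_theta_def T_def ..
  ultimately show ?thesis unfolding th A_def n_def by (simp only: minus_mult_left)
qed
end
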